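(* Let $\mathbf{A}$ be an $n\times n$ skew-symmetric matrix over a field $K$ and $\mathbf{v}\in K^n$. Let \[\mathbf{A}_{\mathbf{v}}=\begin{pmatrix}\mathbf{A}&\mathbf{v}\\-\mathbf{v}^T&0\end{pmatrix},\] an $(n+1)\times(n+1)$ matrix. Then for every $I\subseteq[n]$, \[\det\bigl((\mathbf{A}+\mathbf{v}\mathbf{v}^T)[I]\bigr)=\det\bigl(\mathbf{A}_{\mathbf{v}}[\alpha(I)]\bigr),\] where $\alpha(I)=I$ if $|I|$ is even and $\alpha(I)=I\cup\{n+1\}$ if $|I|$ is odd.
   Context: A matrix is skew-symmetric if $\mathbf{A}_{ij}=-\mathbf{A}_{ji}$ for all $i,j$ and $\mathbf{A}_{ii}=0$ for all $i$. $\mathbf{M}[X]$ denotes the principal submatrix indexed by $X$, with $\det(\mathbf{M}[\emptyset])=1$. *)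

theory Defs
  imports "Jordan_Normal_Form.Determinant" "Jordan_Normal_Form.DL_Submatrix"
begin

(* Indices are 0-based: [n] is {0..<n}; the extra index n+1 of the paper is index n here. *)

definition skew_symmetric :: "'a::field mat \<Rightarrow> bool" where
  "skew_symmetric A \<longleftrightarrow> square_mat A \<and>
     (\<forall>i<dim_row A. \<forall>j<dim_row A. A $$ (i,j) = - A $$ (j,i)) \<and>
     (\<forall>i<dim_row A. A $$ (i,i) = 0)"

(* principal submatrix M[X]; M[{}] is the 0x0 matrix, whose determinant is 1 *)
definition principal_submatrix :: "'a mat \<Rightarrow> nat set \<Rightarrow> 'a mat" where
  "principal_submatrix M X = submatrix M X X"

definition bordered_mat :: "'a::field mat \<Rightarrow> 'a vec \<Rightarrow> 'a mat" where
  "bordered_mat A v = four_block_mat A (mat_of_cols (dim_row A) [v])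
                        (mat_of_rows (dim_row A) [- v]) (0\<^sub>m 1 1)"

definition alpha :: "nat \<Rightarrow> nat set \<Rightarrow> nat set" where
  "alpha n I = (if even (card I) then I else insert n I)"

end

theory Submission imports Defs "HOL-Library.Disjoint_Sets" begin

lemma invol_even:
  assumes "finite S" "\<forall>x\<in>S. p x \<in> S \<and> p (p x) = x \<and> p x \<noteq> x"
  shows "even (card S)"
  using assms
proof (induction "card S" arbitrary: S rule: less_induct)
  case less
  show ?case
  proof (cases "S = {}")
    case True thus ?thesis by simp
  next
    case False
    then obtain x where x: "x \<in> S" by auto
    let ?S' = "S - {x, p x}"
    have px: "p x \<in> S" "p x \<noteq> x" using less.prems x by auto
    have sub: "{x, p x} \<subseteq> S" using x px by auto
    have c2: "card {x, p x} = 2" using px by auto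
    have card: "card ?S' = card S - 2"
      using card_Diff_subset[OF _ sub] c2 by auto
    have cS: "card S \<ge> 2" using card_mono[OF less.prems(1) sub] c2 by simp
    have "even (card ?S')"
    proof (rule less.hyps)
      show "card ?S' < card S" using card cS by simp
      show "finite ?S'" using less.prems by simp
      show "\<forall>z\<in>?S'. p z \<in> ?S' \<and> p (p z) = z \<and> p z \<noteq> z"
      proof
        fix z assume z: "z \<in> ?S'"
        have P: "\<forall>x\<in>S. p x \<in> S \<and> p (p x) = x \<and> p x \<noteq> x" by (rule less.prems(2))
        have zS: "z \<in> S" and zx: "z \<noteq> x" and zpx: "z \<noteq> p x" using z by auto
        have 1: "p z \<in> S" "p (p z) = z" "p z \<noteq> z" using P zS by auto
        have 2: "p (p x) = x" using P x by auto
        have "p z \<noteq> x" using 1 2 zpx by metis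
        moreover have "p z \<noteq> p x" using 1 2 zx by metis
        ultimately show "p z \<in> ?S' \<and> p (p z) = z \<and> p z \<noteq> z" using 1 by auto
      qed
    qed
    then show ?thesis using card cS by simp
  qed
qed

lemma alt_det_zero:
  fixes B :: "'a::comm_ring_1 mat"
  assumes B: "B \<in> carrier_mat m m" and odd: "odd m"
    and skew: "\<And>i j. i < m \<Longrightarrow> j < m \<Longrightarrow> B $$ (i,j) = - B $$ (j,i)"
    and diag: "\<And>i. i < m \<Longrightarrow> B $$ (i,i) = 0"
  shows "det B = 0"
proof -
  define P where "P = {p. p permutes {0..<m}}"
  define f where "f = (\<lambda>p. signof p * (\<Prod>i = 0..<m. B $$ (i, p i)))"
  define P1 where "P1 = {p\<in>P. \<exists>i<m. p i = i}"
  define P2 where "P2 = {p\<in>P. \<forall>i<m. p i \<noteq> i}"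
  have finP: "finite P" unfolding P_def by (simp add: finite_permutations)
  have PU: "P = P1 \<union> P2" "P1 \<inter> P2 = {}" unfolding P1_def P2_def by auto
  have "det B = sum f P" unfolding det_def'[OF B] P_def f_def by simp
  also have "\<dots> = sum f P1 + sum f P2"
    using PU finP by (simp add: sum.union_disjoint)
  also have "sum f P1 = 0"
  proof (rule sum.neutral, rule ballI)
    fix p assume "p \<in> P1"
    then obtain i where i: "i < m" "p i = i" unfolding P1_def by auto
    have "(\<Prod>i = 0..<m. B $$ (i, p i)) = 0"
      using i diag by (intro prod_zero) (auto intro!: bexI[of _ i])
    then show "f p = 0" unfolding f_def by simp
  qed
  also have "sum f P2 = 0"
  proof (rule sum_involution_eq_0[where h = "\<lambda>q. Hilbert_Choice.inv q"])
    fix p assume p: "p \<in> P2"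
    hence pp: "p permutes {0..<m}" and nf: "\<forall>i<m. p i \<noteq> i" unfolding P2_def P_def by auto
    have ip: "Hilbert_Choice.inv p permutes {0..<m}" using permutes_inv[OF pp] .
    show "Hilbert_Choice.inv p \<in> P2" unfolding P2_def P_def
    proof (intro CollectI conjI allI impI)
      show "Hilbert_Choice.inv p permutes {0..<m}" using ip .
      fix i assume "i < m"
      show "Hilbert_Choice.inv p i \<noteq> i" using nf \<open>i < m\<close> by (metis permutes_inverses(1)[OF pp])
    qed
    show "Hilbert_Choice.inv (Hilbert_Choice.inv p) = p" using inv_inv_eq[OF permutes_bij[OF pp]] .
    show "Hilbert_Choice.inv p \<noteq> p"
    proof
      assume eq: "Hilbert_Choice.inv p = p"
      have "even (card {0..<m})"
      proof (rule invol_even[where p = p])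
        show "\<forall>x\<in>{0..<m}. p x \<in> {0..<m} \<and> p (p x) = x \<and> p x \<noteq> x"
        proof
          fix x assume x: "x \<in> {0..<m}"
          have "p x \<in> {0..<m}" using permutes_in_image[OF pp] x by simp
          moreover have "p (p x) = x" using permutes_inverses(2)[OF pp, of x] eq by simp
          moreover have "p x \<noteq> x" using nf x by simp
          ultimately show "p x \<in> {0..<m} \<and> p (p x) = x \<and> p x \<noteq> x" by simp
        qed
      qed simp
      with odd show False by simp
    qed
    have "(\<Prod>i = 0..<m. B $$ (i, Hilbert_Choice.inv p i)) = (\<Prod>i = 0..<m. B $$ (p i, Hilbert_Choice.inv p (p i)))"
      using prod.reindex_bij_betw[OF permutes_imp_bij[OF pp], of "\<lambda>i. B $$ (i, Hilbert_Choice.inv p i)"] by simp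
    also have "\<dots> = (\<Prod>i = 0..<m. - B $$ (i, p i))"
    proof (rule prod.cong)
      fix x assume x: "x \<in> {0..<m}"
      have "p x \<in> {0..<m}" using permutes_in_image[OF pp] x by simp
      then show "B $$ (p x, Hilbert_Choice.inv p (p x)) = - B $$ (x, p x)"
        using x skew[of "p x" x] by (simp add: permutes_inverses(2)[OF pp])
    qed simp
    also have "\<dots> = (-1)^m * (\<Prod>i = 0..<m. B $$ (i, p i))"
      by (subst prod_uminus) simp
    also have "\<dots> = - (\<Prod>i = 0..<m. B $$ (i, p i))" using odd by simp
    finally have pr: "(\<Prod>i = 0..<m. B $$ (i, Hilbert_Choice.inv p i)) = - (\<Prod>i = 0..<m. B $$ (i, p i))" .
    have sg: "signof (Hilbert_Choice.inv p) = signof p" using signof_inv[OF _ pp] by simp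
    show "f (Hilbert_Choice.inv p) + f p = 0" unfolding f_def pr sg by simp
  qed
  finally show ?thesis by simp
qed

lemma block_det:
  fixes B :: "'a::field mat"
  assumes B: "B \<in> carrier_mat k k" and w: "w \<in> carrier_vec k"
  shows "det (B + mat_of_cols k [w] * mat_of_rows k [w])
    = det (four_block_mat B (mat_of_cols k [w]) (mat_of_rows k [-w]) (0\<^sub>m 1 1)) + det B"
proof -
  define W where "W = mat_of_cols k [w]"
  define R where "R = mat_of_rows k [w]"
  define Rn where "Rn = mat_of_rows k [-w]"
  define C where "C = four_block_mat B W Rn (0\<^sub>m 1 1)"
  define M where "M = four_block_mat B W Rn (1\<^sub>m 1)"
  define E where "E = four_block_mat (1\<^sub>m k) (0\<^sub>m k 1) R (1\<^sub>m 1)"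
  have W: "W \<in> carrier_mat k 1" and R: "R \<in> carrier_mat 1 k" and Rn: "Rn \<in> carrier_mat 1 k"
    unfolding W_def R_def Rn_def by auto
  have M: "M \<in> carrier_mat (k+1) (k+1)" unfolding M_def using B by auto
  have C: "C \<in> carrier_mat (k+1) (k+1)" unfolding C_def using B by auto
  have E: "E \<in> carrier_mat (k+1) (k+1)" unfolding E_def by auto
  have RR: "Rn * 1\<^sub>m k + 1\<^sub>m 1 * R = 0\<^sub>m 1 k"
    using Rn R w unfolding Rn_def R_def
    by (intro eq_matI) (auto simp: mat_of_rows_def)
  have ME: "M * E = four_block_mat (B + W * R) W (0\<^sub>m 1 k) (1\<^sub>m 1)"
    unfolding M_def E_def
    apply (subst mult_four_block_mat[OF B W Rn one_carrier_mat one_carrier_mat zero_carrier_mat R one_carrier_mat])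
    using B W Rn R RR
    by (simp add: right_mult_one_mat[OF B] right_mult_zero_mat[OF B] right_mult_one_mat[OF W]
        left_mult_one_mat[OF R] right_mult_zero_mat[OF Rn] left_add_zero_mat[OF W]
        left_add_zero_mat[OF one_carrier_mat] del: four_block_carrier_mat)
  have "det (M * E) = det (B + W * R)"
    unfolding ME using B W R
    by (subst det_four_block_mat_lower_left_zero[where n=k and m=1]) auto
  moreover have "det E = 1" unfolding E_def using R
    by (subst det_four_block_mat_upper_right_zero[where n=k and m=1]) auto
  moreover have "det (M * E) = det M * det E" using det_mult[OF M E] .
  ultimately have 1: "det (B + W * R) = det M" by simp
  have eqMC: "M $$ (a,b) = C $$ (a,b)" if "a < k+1" "b < k+1" "a \<noteq> k \<or> b \<noteq> k" for a b
  proof -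
    have d: "dim_row B = k" "dim_col B = k" "dim_row (1\<^sub>m 1 :: 'a mat) = 1" "dim_col (1\<^sub>m 1 :: 'a mat) = 1"
      "dim_row (0\<^sub>m 1 1 :: 'a mat) = 1" "dim_col (0\<^sub>m 1 1 :: 'a mat) = 1" using B by auto
    have ab: "a < k \<or> b < k" using that by auto
    show ?thesis unfolding M_def C_def using that(1,2) ab by (cases "a < k") (simp_all add: d)
  qed
  have Mkk: "M $$ (k,k) = 1" using B W Rn unfolding M_def by simp
  have Ckk: "C $$ (k,k) = 0" using B W Rn unfolding C_def by simp
  have del: "mat_delete M a k = mat_delete C a k" for a
    using M C eqMC by (intro eq_matI) (auto simp: mat_delete_def)
  have delB: "mat_delete M k k = B"
    using M B by (intro eq_matI) (auto simp: mat_delete_def M_def)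
  have "det M = (\<Sum>i<k+1. M $$ (i,k) * cofactor M i k)"
    using laplace_expansion_column[OF M, of k] by simp
  also have "\<dots> = (\<Sum>i<k. M $$ (i,k) * cofactor M i k) + M $$ (k,k) * cofactor M k k" by simp
  also have "(\<Sum>i<k. M $$ (i,k) * cofactor M i k) = (\<Sum>i<k. C $$ (i,k) * cofactor C i k)"
    using eqMC del by (intro sum.cong) (auto simp: cofactor_def)
  also have "M $$ (k,k) * cofactor M k k = det B"
    using delB Mkk by (simp add: cofactor_def)
  also have "(\<Sum>i<k. C $$ (i,k) * cofactor C i k) = det C"
  proof -
    have "det C = (\<Sum>i<k+1. C $$ (i,k) * cofactor C i k)"
      using laplace_expansion_column[OF C, of k] by simp
    also have "\<dots> = (\<Sum>i<k. C $$ (i,k) * cofactor C i k)" using Ckk by simp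
    finally show ?thesis by simp
  qed
  finally have "det (B + W * R) = det C + det B" using 1 by simp
  then show ?thesis unfolding C_def W_def R_def Rn_def .
qed

lemma VV_index:
  assumes "v \<in> carrier_vec n" "p < n" "q < n"
  shows "(mat_of_cols n [v] * mat_of_rows n [v]) $$ (p,q) = v $ p * v $ q"
  using assms by (simp add: mat_of_cols_def mat_of_rows_def scalar_prod_def)

theorem lemma2p27:
  fixes A :: "'a::field mat" and v :: "'a vec" and n :: nat and I :: "nat set"
  assumes "A \<in> carrier_mat n n" and "skew_symmetric A"
    and "v \<in> carrier_vec n" and "I \<subseteq> {0..<n}"
  shows "det (principal_submatrix (A + mat_of_cols n [v] * mat_of_rows n [v]) I)
       = det (principal_submatrix (bordered_mat A v) (alpha n I))"
proof -
  note An = assms(1) and vn = assms(3) and In = assms(4)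
  have sd: "square_mat A \<and> (\<forall>i<dim_row A. \<forall>j<dim_row A. A $$ (i,j) = - A $$ (j,i)) \<and> (\<forall>i<dim_row A. A $$ (i,i) = 0)"
    using assms(2) unfolding skew_symmetric_def .
  have dr: "dim_row A = n" using An by simp
  have skA: "A $$ (i,j) = - A $$ (j,i)" if "i < n" "j < n" for i j
    using sd[unfolded dr] that by blast
  have dA: "A $$ (i,i) = 0" if "i < n" for i
    using sd[unfolded dr] that by blast
  define k where "k = card I"
  have finI: "finite I" using In finite_subset by blast
  have SI: "{i. i < n \<and> i \<in> I} = I" using In by auto
  have pk: "pick I i \<in> I" if "i < k" for i 
  proof -
    have "i < card I" using that unfolding k_def .
    then show ?thesis by (rule pick_in_set[OF disjI1])
  qed
  have pn: "pick I i < n" if "i < k" for i using subsetD[OF In pk[OF that]] by simp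
  define B where "B = submatrix A I I"
  define w where "w = vec k (\<lambda>i. v $ pick I i)"
  have dcA: "dim_col A = n" using An by simp
  have SIk: "card {i. i < n \<and> i \<in> I} = k" unfolding SI k_def ..
  have dB0: "dim_row B = k" "dim_col B = k" unfolding B_def
    by (simp only: dim_submatrix dr dcA SIk)+
  have B: "B \<in> carrier_mat k k" using dB0 by (intro carrier_matI)
  have w: "w \<in> carrier_vec k" unfolding w_def by simp
  have Bij: "B $$ (i,j) = A $$ (pick I i, pick I j)" if "i < k" "j < k" for i j
    unfolding B_def submatrix_def using that An SI k_def by simp
  have skB: "B $$ (i,j) = - B $$ (j,i)" if "i < k" "j < k" for i j
    using Bij[OF that] Bij[OF that(2,1)] skA[OF pn[OF that(1)] pn[OF that(2)]] by simp
  have dB: "B $$ (i,i) = 0" if "i < k" for i using Bij that dA pn by simp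
  define C where "C = four_block_mat B (mat_of_cols k [w]) (mat_of_rows k [-w]) (0\<^sub>m 1 1)"
  have C: "C \<in> carrier_mat (k+1) (k+1)" unfolding C_def using B by auto
  have dBk: "dim_row B = k" "dim_col B = k" using B by auto
  have Cij: "C $$ (i,j) = (if i < k then if j < k then B $$ (i,j) else w $ i
       else if j < k then - w $ j else 0)" if "i < k+1" "j < k+1" for i j
    unfolding C_def using that w by (simp add: dBk mat_of_cols_def mat_of_rows_def)
  have LHS: "principal_submatrix (A + mat_of_cols n [v] * mat_of_rows n [v]) I
      = B + mat_of_cols k [w] * mat_of_rows k [w]"
  proof (rule eq_matI)
    show "dim_row (principal_submatrix (A + mat_of_cols n [v] * mat_of_rows n [v]) I)
      = dim_row (B + mat_of_cols k [w] * mat_of_rows k [w])"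
      unfolding principal_submatrix_def using An SI k_def dBk by (simp add: dim_submatrix)
    show "dim_col (principal_submatrix (A + mat_of_cols n [v] * mat_of_rows n [v]) I)
      = dim_col (B + mat_of_cols k [w] * mat_of_rows k [w])"
      unfolding principal_submatrix_def using An SI k_def dBk by (simp add: dim_submatrix)
    fix i j assume "i < dim_row (B + mat_of_cols k [w] * mat_of_rows k [w])"
      "j < dim_col (B + mat_of_cols k [w] * mat_of_rows k [w])"
    hence ij: "i < k" "j < k" using dBk by auto
    have "principal_submatrix (A + mat_of_cols n [v] * mat_of_rows n [v]) I $$ (i,j)
        = (A + mat_of_cols n [v] * mat_of_rows n [v]) $$ (pick I i, pick I j)"
      unfolding principal_submatrix_def submatrix_def using ij An SI k_def by simp
    also have "\<dots> = A $$ (pick I i, pick I j) + v $ pick I i * v $ pick I j"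
      using ij pn An VV_index[OF vn] by simp
    also have "\<dots> = (B + mat_of_cols k [w] * mat_of_rows k [w]) $$ (i,j)"
      using ij B w Bij VV_index[OF w ij] by (simp add: w_def)
    finally show "principal_submatrix (A + mat_of_cols n [v] * mat_of_rows n [v]) I $$ (i,j)
      = (B + mat_of_cols k [w] * mat_of_rows k [w]) $$ (i,j)" .
  qed
  have key: "det (B + mat_of_cols k [w] * mat_of_rows k [w]) = det C + det B"
    unfolding C_def by (rule block_det[OF B w])
  have dbA: "dim_row (bordered_mat A v) = n+1" "dim_col (bordered_mat A v) = n+1"
    unfolding bordered_mat_def using An by auto
  have bAij: "bordered_mat A v $$ (p,q) = (if p < n then if q < n then A $$ (p,q) else v $ p
       else if q < n then - v $ q else 0)" if "p < n+1" "q < n+1" for p q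
    unfolding bordered_mat_def using that An vn by (simp add: mat_of_cols_def mat_of_rows_def)
  show ?thesis
  proof (cases "even k")
    case True
    have al: "alpha n I = I" unfolding alpha_def using True k_def by simp
    have SI1: "{i. i < n+1 \<and> i \<in> I} = I" using In by auto
    have R: "principal_submatrix (bordered_mat A v) (alpha n I) = B"
    proof (rule eq_matI)
      show "dim_row (principal_submatrix (bordered_mat A v) (alpha n I)) = dim_row B"
        unfolding principal_submatrix_def al using dbA SI1 k_def dBk by (simp add: dim_submatrix)
      show "dim_col (principal_submatrix (bordered_mat A v) (alpha n I)) = dim_col B"
        unfolding principal_submatrix_def al using dbA SI1 k_def dBk by (simp add: dim_submatrix)
      fix i j assume "i < dim_row B" "j < dim_col B"
      hence ij: "i < k" "j < k" using dBk by auto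
      show "principal_submatrix (bordered_mat A v) (alpha n I) $$ (i,j) = B $$ (i,j)"
        unfolding principal_submatrix_def submatrix_def al
        using ij dbA SI1 k_def Bij[OF ij] bAij[of "pick I i" "pick I j"] pn[OF ij(1)] pn[OF ij(2)] by simp
    qed
    have "det C = 0"
    proof (rule alt_det_zero[OF C])
      show "odd (k+1)" using True by simp
      fix i j assume ij: "i < k+1" "j < k+1"
      show "C $$ (i,j) = - C $$ (j,i)"
        using Cij[OF ij] Cij[OF ij(2,1)] skB[of i j] ij by auto
    next
      fix i assume i: "i < k+1"
      show "C $$ (i,i) = 0" using Cij[OF i i] dB[of i] by auto
    qed
    then show ?thesis using LHS key R by simp
  next
    case False
    have al: "alpha n I = insert n I" unfolding alpha_def using False k_def by simp
    have SI1: "{i. i < n+1 \<and> i \<in> insert n I} = insert n I" using In by auto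
    have cI: "card (insert n I) = k+1" 
    proof -
      have nI: "n \<notin> I" using In by auto
      show ?thesis using card_insert_disjoint[OF finI nI] unfolding k_def by simp
    qed
    have SI2: "{a. a < n \<and> a \<in> insert n I} = I" using In by auto
    have pick1: "pick (insert n I) i = pick I i" if "i < k" for i
      using pick_reduce_set[of i n "insert n I"] that SI2 k_def by simp
    have SI3: "{a \<in> insert n I. a < n} = I" using In by auto
    have pick2: "pick (insert n I) k = n"
      using pick_card_in_set[of n "insert n I"] SI3 k_def by simp
    have R: "principal_submatrix (bordered_mat A v) (alpha n I) = C"
    proof (rule eq_matI)
      show "dim_row (principal_submatrix (bordered_mat A v) (alpha n I)) = dim_row C"
        unfolding principal_submatrix_def al using dbA SI1 cI C by (simp add: dim_submatrix)
      show "dim_col (principal_submatrix (bordered_mat A v) (alpha n I)) = dim_col C"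
        unfolding principal_submatrix_def al using dbA SI1 cI C by (simp add: dim_submatrix)
      fix i j assume "i < dim_row C" "j < dim_col C"
      hence ij: "i < k+1" "j < k+1" using C by auto
      have "principal_submatrix (bordered_mat A v) (alpha n I) $$ (i,j)
          = bordered_mat A v $$ (pick (insert n I) i, pick (insert n I) j)"
        unfolding principal_submatrix_def submatrix_def al using ij dbA SI1 cI by simp
      also have "\<dots> = C $$ (i,j)"
      proof -
        have pi: "pick (insert n I) i = (if i < k then pick I i else n)"
        proof (cases "i < k")
          case False hence "i = k" using ij by simp
          thus ?thesis using pick2 by simp
        qed (use pick1 in simp)
        have pj: "pick (insert n I) j = (if j < k then pick I j else n)"
        proof (cases "j < k")
          case False hence "j = k" using ij by simp
          thus ?thesis using pick2 by simp
        qed (use pick1 in simp)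
        consider (a) "i<k" "j<k" | (b) "i<k" "\<not> j<k" | (c) "\<not> i<k" "j<k" | (d) "\<not> i<k" "\<not> j<k"
          by blast
        then show ?thesis
        proof cases
          case a thus ?thesis unfolding pi pj Cij[OF ij]
            using bAij[of "pick I i" "pick I j"] pn[of i] pn[of j] Bij[of i j] by simp
        next
          case b thus ?thesis unfolding pi pj Cij[OF ij]
            using bAij[of "pick I i" n] pn[of i] by (simp add: w_def)
        next
          case c thus ?thesis unfolding pi pj Cij[OF ij]
            using bAij[of n "pick I j"] pn[of j] by (simp add: w_def)
        next
          case d thus ?thesis unfolding pi pj Cij[OF ij]
            using bAij[of n n] by simp
        qed
      qed
      finally show "principal_submatrix (bordered_mat A v) (alpha n I) $$ (i,j) = C $$ (i,j)" .
    qed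
    have "det B = 0"
    proof (rule alt_det_zero[OF B])
      show "odd k" using False by simp
    qed (fact skB, fact dB)
    then show ?thesis using LHS key R by simp
  qed
qed

end
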